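(* Let $R$ be an associative unital division ring over a field of characteristic $0$, and let $\varphi_k\in R$ for $k\in\mathbb{Z}$. For $m\in\mathbb{Z}$ and $n\geq1$ put $$\Theta_{m,n}=\bigl(\varphi_{m+i+j-1}\bigr)_{1\leq i,j\leq n},\qquad \theta_{m,n}=|\Theta_{m,n}|_{nn},$$ with the convention $\theta_{m,0}^{-1}:=0$, and assume all quasideterminants involved are defined and all $\theta_{m,n}$ ($n\ge1$) invertible. Then for all $m\in\mathbb{Z}$, $n\geq1$, $$\theta_{m+2,n}=\theta_{m,n+1}+\theta_{m+1,n}\bigl(\theta_{m,n}^{-1}-\theta_{m+2,n-1}^{-1}\bigr)\theta_{m+1,n}.$$
   Context: For an $n\times n$ matrix $X$ over $R$, $|X|_{ij}=x_{ij}-r_i^j(X^{ij})^{-1}c_j^i$, where $X^{ij}$ is $X$ with row $i$ and column $j$ removed, $r_i^j$ is row $i$ without its $j$-th entry and $c_j^i$ is column $j$ without its $i$-th entry; for $n=1$, $|X|_{11}=x_{11}$. *)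

theory Defs
  imports Main
begin

text \<open>Square matrices of size n over a ring are represented as functions
  nat \<Rightarrow> nat \<Rightarrow> 'a, using only the entries with indices 0..n-1
  (0-based indexing: entry (i,j) here is entry (i+1,j+1) in the paper).\<close>

definition mat_mult :: "nat \<Rightarrow> (nat \<Rightarrow> nat \<Rightarrow> 'a::semiring_0) \<Rightarrow> (nat \<Rightarrow> nat \<Rightarrow> 'a) \<Rightarrow> nat \<Rightarrow> nat \<Rightarrow> 'a" where
  "mat_mult n A B = (\<lambda>i j. \<Sum>k<n. A i k * B k j)"

definition is_mat_inverse :: "nat \<Rightarrow> (nat \<Rightarrow> nat \<Rightarrow> 'a::semiring_1) \<Rightarrow> (nat \<Rightarrow> nat \<Rightarrow> 'a) \<Rightarrow> bool" where
  "is_mat_inverse n A B \<longleftrightarrow>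
     (\<forall>i<n. \<forall>j<n. mat_mult n A B i j = (if i = j then 1 else 0)) \<and>
     (\<forall>i<n. \<forall>j<n. mat_mult n B A i j = (if i = j then 1 else 0))"

definition mat_invertible :: "nat \<Rightarrow> (nat \<Rightarrow> nat \<Rightarrow> 'a::semiring_1) \<Rightarrow> bool" where
  "mat_invertible n A \<longleftrightarrow> (\<exists>B. is_mat_inverse n A B)"

text \<open>The (two-sided) inverse, normalised to be 0 outside the index range so it is unique.\<close>
definition mat_inv :: "nat \<Rightarrow> (nat \<Rightarrow> nat \<Rightarrow> 'a::semiring_1) \<Rightarrow> nat \<Rightarrow> nat \<Rightarrow> 'a" where
  "mat_inv n A = (THE B. is_mat_inverse n A B \<and> (\<forall>i j. (n \<le> i \<or> n \<le> j) \<longrightarrow> B i j = 0))"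

definition skip :: "nat \<Rightarrow> nat \<Rightarrow> nat" where
  "skip i a = (if a < i then a else Suc a)"

definition minor :: "(nat \<Rightarrow> nat \<Rightarrow> 'a) \<Rightarrow> nat \<Rightarrow> nat \<Rightarrow> nat \<Rightarrow> nat \<Rightarrow> 'a" where
  "minor X i j = (\<lambda>a b. X (skip i a) (skip j b))"

definition qdet :: "nat \<Rightarrow> (nat \<Rightarrow> nat \<Rightarrow> 'a::ring_1) \<Rightarrow> nat \<Rightarrow> nat \<Rightarrow> 'a" where
  "qdet n X i j =
     (if n = 1 then X i j
      else X i j - (\<Sum>a<n-1. \<Sum>b<n-1.
              X i (skip j a) * mat_inv (n-1) (minor X i j) a b * X (skip i b) j))"

definition qdet_defined :: "nat \<Rightarrow> (nat \<Rightarrow> nat \<Rightarrow> 'a::semiring_1) \<Rightarrow> nat \<Rightarrow> nat \<Rightarrow> bool" where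
  "qdet_defined n X i j \<longleftrightarrow> n = 1 \<or> mat_invertible (n-1) (minor X i j)"

definition Theta :: "(int \<Rightarrow> 'a) \<Rightarrow> int \<Rightarrow> nat \<Rightarrow> nat \<Rightarrow> nat \<Rightarrow> 'a" where
  "Theta \<phi> m n = (\<lambda>i j. \<phi> (m + int i + int j + 1))"

definition theta :: "(int \<Rightarrow> 'a::ring_1) \<Rightarrow> int \<Rightarrow> nat \<Rightarrow> 'a" where
  "theta \<phi> m n = qdet n (Theta \<phi> m n) (n-1) (n-1)"

definition theta_inv :: "(int \<Rightarrow> 'a::division_ring) \<Rightarrow> int \<Rightarrow> nat \<Rightarrow> 'a" where
  "theta_inv \<phi> m n = (if n = 0 then 0 else inverse (theta \<phi> m n))"

end

theory Submission
  imports Defs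
begin

lemma delta_sum_r:
  fixes f :: "nat \<Rightarrow> 'a::ring_1"
  assumes "j < n" shows "(\<Sum>k<n. f k * (if k = j then 1 else 0)) = f j"
proof -
  have "(\<Sum>k<n. f k * (if k = j then 1 else 0)) = (\<Sum>k<n. if k = j then f k else 0)"
    by (rule sum.cong) auto
  also have "\<dots> = f j" using assms by (simp add: sum.delta)
  finally show ?thesis .
qed

lemma delta_sum_l:
  fixes f :: "nat \<Rightarrow> 'a::ring_1"
  assumes "j < n" shows "(\<Sum>k<n. (if j = k then 1 else 0) * f k) = f j"
proof -
  have "(\<Sum>k<n. (if j = k then 1 else 0) * f k) = (\<Sum>k<n. if j = k then f k else 0)"
    by (rule sum.cong) auto
  also have "\<dots> = f j" using assms by (simp add: sum.delta)
  finally show ?thesis .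
qed

lemma is_inv_cong:
  assumes "\<And>i j. i<n \<Longrightarrow> j<n \<Longrightarrow> A i j = A' i j"
  shows "is_mat_inverse n A B = is_mat_inverse n A' B"
proof -
  have "\<And>i j. i<n \<Longrightarrow> j<n \<Longrightarrow> mat_mult n A B i j = mat_mult n A' B i j"
    unfolding mat_mult_def using assms by (auto intro!: sum.cong)
  moreover have "\<And>i j. i<n \<Longrightarrow> j<n \<Longrightarrow> mat_mult n B A i j = mat_mult n B A' i j"
    unfolding mat_mult_def using assms by (auto intro!: sum.cong)
  ultimately show ?thesis unfolding is_mat_inverse_def by auto
qed

lemma mat_inv_cong:
  assumes "\<And>i j. i<n \<Longrightarrow> j<n \<Longrightarrow> A i j = A' i j"
  shows "mat_inv n A = mat_inv n A'"
  unfolding mat_inv_def using is_inv_cong[OF assms] by simp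

lemma inv_unique:
  fixes A B C :: "nat \<Rightarrow> nat \<Rightarrow> 'a::ring_1"
  assumes B: "is_mat_inverse n A B" and C: "is_mat_inverse n A C" and ij: "i<n" "j<n"
  shows "B i j = C i j"
proof -
  have "B i j = (\<Sum>k<n. B i k * (if k = j then 1 else 0))" using delta_sum_r[OF ij(2), of "B i"] by simp
  also have "\<dots> = (\<Sum>k<n. B i k * (\<Sum>l<n. A k l * C l j))"
    using C ij unfolding is_mat_inverse_def mat_mult_def by (auto intro!: sum.cong)
  also have "\<dots> = (\<Sum>k<n. \<Sum>l<n. B i k * A k l * C l j)"
    by (simp add: sum_distrib_left mult.assoc)
  also have "\<dots> = (\<Sum>l<n. \<Sum>k<n. B i k * A k l * C l j)" by (rule sum.swap)
  also have "\<dots> = (\<Sum>l<n. (\<Sum>k<n. B i k * A k l) * C l j)"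
    by (simp add: sum_distrib_right)
  also have "\<dots> = (\<Sum>l<n. (if i = l then 1 else 0) * C l j)"
    using B ij unfolding is_mat_inverse_def mat_mult_def by (auto intro!: sum.cong)
  also have "\<dots> = C i j" using delta_sum_l[OF ij(1), of "\<lambda>l. C l j"] by simp
  finally show ?thesis .
qed

lemma mat_inv_is_inverse:
  fixes A :: "nat \<Rightarrow> nat \<Rightarrow> 'a::ring_1"
  assumes "mat_invertible n A" shows "is_mat_inverse n A (mat_inv n A)"
proof -
  obtain B where B: "is_mat_inverse n A B" using assms mat_invertible_def by blast
  define B' where "B' = (\<lambda>i j. if i < n \<and> j < n then B i j else 0)"
  have B'inv: "is_mat_inverse n A B'" using B unfolding is_mat_inverse_def mat_mult_def B'_def
    by simp
  have ex: "is_mat_inverse n A B' \<and> (\<forall>i j. (n \<le> i \<or> n \<le> j) \<longrightarrow> B' i j = 0)"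
    using B'inv by (auto simp: B'_def)
  have uniq: "C = B'" if "is_mat_inverse n A C \<and> (\<forall>i j. (n \<le> i \<or> n \<le> j) \<longrightarrow> C i j = 0)" for C
  proof (rule ext, rule ext)
    fix i j show "C i j = B' i j"
    proof (cases "i < n \<and> j < n")
      case True then show ?thesis using inv_unique[of n A C B' i j] B'inv that by blast
    next
      case False then show ?thesis using that by (auto simp: B'_def)
    qed
  qed
  have "mat_inv n A = B'" unfolding mat_inv_def using ex uniq by (rule the_equality)
  then show ?thesis using B'inv by simp
qed

lemma row_zero:
  fixes A B :: "nat \<Rightarrow> nat \<Rightarrow> 'a::ring_1"
  assumes B: "is_mat_inverse n A B" and u: "\<And>j. j<n \<Longrightarrow> (\<Sum>k<n. u k * A k j) = 0" and i: "i<n"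
  shows "u i = 0"
proof -
  have "u i = (\<Sum>k<n. u k * (if k = i then 1 else 0))" using delta_sum_r[OF i, of u] by simp
  also have "\<dots> = (\<Sum>k<n. u k * (\<Sum>j<n. A k j * B j i))"
    using B i unfolding is_mat_inverse_def mat_mult_def by (auto intro!: sum.cong)
  also have "\<dots> = (\<Sum>k<n. \<Sum>j<n. u k * A k j * B j i)"
    by (simp add: sum_distrib_left mult.assoc)
  also have "\<dots> = (\<Sum>j<n. \<Sum>k<n. u k * A k j * B j i)" by (rule sum.swap)
  also have "\<dots> = (\<Sum>j<n. (\<Sum>k<n. u k * A k j) * B j i)"
    by (simp add: sum_distrib_right)
  also have "\<dots> = 0" using u by simp
  finally show ?thesis .
qed


definition Pc :: "(int \<Rightarrow> 'a::ring_1) \<Rightarrow> int \<Rightarrow> nat \<Rightarrow> nat \<Rightarrow> 'a" where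
  "Pc \<phi> m d k = (if k < d then - (\<Sum>a<d. \<phi> (m + int d + int a + 1) * mat_inv d (Theta \<phi> m d) a k)
                 else if k = d then 1 else 0)"

definition pairing :: "(int \<Rightarrow> 'a::ring_1) \<Rightarrow> nat \<Rightarrow> int \<Rightarrow> (nat \<Rightarrow> 'a) \<Rightarrow> nat \<Rightarrow> 'a" where
  "pairing \<phi> K m u j = (\<Sum>k<K. u k * \<phi> (m + int k + int j + 1))"

definition sh :: "(nat \<Rightarrow> 'a::zero) \<Rightarrow> nat \<Rightarrow> 'a" where
  "sh v k = (case k of 0 \<Rightarrow> 0 | Suc k' \<Rightarrow> v k')"

definition qc :: "(int \<Rightarrow> 'a::ring_1) \<Rightarrow> int \<Rightarrow> nat \<Rightarrow> 'a" where
  "qc \<phi> m d = (if d = 0 then 0 else Pc \<phi> m d (d - 1))"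

lemma pairing_trunc:
  assumes "d \<le> K" "\<And>k. d \<le> k \<Longrightarrow> u k = 0"
  shows "pairing \<phi> K m u j = (\<Sum>k<d. u k * \<phi> (m + int k + int j + 1))"
  unfolding pairing_def
  by (rule sum.mono_neutral_right) (use assms in auto)

lemma pairing_diff:
  "pairing \<phi> K m (\<lambda>k. u k - v k) j = pairing \<phi> K m u j - pairing \<phi> K m v j"
  unfolding pairing_def by (simp add: left_diff_distrib sum_subtractf)

lemma pairing_smult:
  "pairing \<phi> K m (\<lambda>k. c * u k) j = c * pairing \<phi> K m u j"
  unfolding pairing_def by (simp add: sum_distrib_left mult.assoc)

lemma pairing_Suc:
  "pairing \<phi> K (m+1) u j = pairing \<phi> K m u (Suc j)"
  unfolding pairing_def by (rule sum.cong) (auto simp: algebra_simps)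

lemma pairing_sh:
  assumes "0 < K" "u (K - 1) = 0"
  shows "pairing \<phi> K m (sh u) j = pairing \<phi> K (m+1) u j"
proof -
  obtain K' where K: "K = Suc K'" using assms(1) by (cases K) auto
  have "pairing \<phi> K m (sh u) j = (\<Sum>k<K'. u k * \<phi> (m + int (Suc k) + int j + 1))"
    unfolding pairing_def K sum.lessThan_Suc_shift by (simp add: sh_def)
  also have "\<dots> = (\<Sum>k<K'. u k * \<phi> ((m+1) + int k + int j + 1))"
    by (rule sum.cong) (auto simp: algebra_simps)
  also have "\<dots> = pairing \<phi> K (m+1) u j"
    unfolding pairing_def K using assms(2) K by simp
  finally show ?thesis .
qed

lemma Pc_d: "Pc \<phi> m d d = 1" and Pc_gt: "d < k \<Longrightarrow> Pc \<phi> m d k = 0"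
  unfolding Pc_def by auto

lemma orth:
  fixes \<phi> :: "int \<Rightarrow> 'a::ring_1"
  assumes inv: "is_mat_inverse d (Theta \<phi> m d) (mat_inv d (Theta \<phi> m d))" and dK: "d < K"
  shows "j < d \<Longrightarrow> pairing \<phi> K m (Pc \<phi> m d) j = 0"
    and "pairing \<phi> K m (Pc \<phi> m d) d = theta \<phi> m (d+1)"
proof -
  let ?I = "mat_inv d (Theta \<phi> m d)"
  let ?f = "\<lambda>a. \<phi> (m + int d + int a + 1)"
  have gen: "pairing \<phi> K m (Pc \<phi> m d) j =
     \<phi> (m + int d + int j + 1) - (\<Sum>a<d. ?f a * (\<Sum>k<d. ?I a k * \<phi> (m + int k + int j + 1)))" for j
  proof -
    have "pairing \<phi> K m (Pc \<phi> m d) j = (\<Sum>k<Suc d. Pc \<phi> m d k * \<phi> (m + int k + int j + 1))"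
      by (rule pairing_trunc) (use dK in \<open>auto simp: Pc_def\<close>)
    also have "\<dots> = (\<Sum>k<d. - (\<Sum>a<d. ?f a * ?I a k) * \<phi> (m + int k + int j + 1))
                    + \<phi> (m + int d + int j + 1)"
      by (simp add: Pc_def)
    also have "(\<Sum>k<d. - (\<Sum>a<d. ?f a * ?I a k) * \<phi> (m + int k + int j + 1))
       = - (\<Sum>k<d. \<Sum>a<d. ?f a * ?I a k * \<phi> (m + int k + int j + 1))"
      by (simp add: sum_distrib_right sum_negf)
    also have "(\<Sum>k<d. \<Sum>a<d. ?f a * ?I a k * \<phi> (m + int k + int j + 1))
       = (\<Sum>a<d. \<Sum>k<d. ?f a * ?I a k * \<phi> (m + int k + int j + 1))" by (rule sum.swap)
    also have "\<dots> = (\<Sum>a<d. ?f a * (\<Sum>k<d. ?I a k * \<phi> (m + int k + int j + 1)))"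
      by (simp add: sum_distrib_left mult.assoc)
    finally show ?thesis by simp
  qed
  show "pairing \<phi> K m (Pc \<phi> m d) j = 0" if j: "j < d"
  proof -
    have "(\<Sum>a<d. ?f a * (\<Sum>k<d. ?I a k * \<phi> (m + int k + int j + 1)))
        = (\<Sum>a<d. ?f a * (if a = j then 1 else 0))"
      using inv j unfolding is_mat_inverse_def mat_mult_def Theta_def by (auto intro!: sum.cong)
    also have "\<dots> = ?f j" using delta_sum_r[OF j, of ?f] by simp
    finally show ?thesis using gen[of j] by simp
  qed
  show "pairing \<phi> K m (Pc \<phi> m d) d = theta \<phi> m (d+1)"
  proof (cases "d = 0")
    case True
    then show ?thesis using gen[of 0] by (simp add: theta_def qdet_def Theta_def)
  next
    case False
    let ?X = "Theta \<phi> m (Suc d)"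
    have mi: "mat_inv d (minor ?X d d) = ?I"
      by (rule mat_inv_cong) (simp add: minor_def skip_def Theta_def)
    have "theta \<phi> m (d+1) = ?X d d - (\<Sum>a<d. \<Sum>b<d. ?X d (skip d a) * ?I a b * ?X (skip d b) d)"
      using False by (simp add: theta_def qdet_def mi)
    also have "(\<Sum>a<d. \<Sum>b<d. ?X d (skip d a) * ?I a b * ?X (skip d b) d)
       = (\<Sum>a<d. ?f a * (\<Sum>k<d. ?I a k * \<phi> (m + int k + int d + 1)))"
      by (auto simp: skip_def Theta_def sum_distrib_left mult.assoc algebra_simps intro!: sum.cong)
    finally show ?thesis using gen[of d] by (simp add: Theta_def)
  qed
qed


lemma multiple:
  fixes \<phi> :: "int \<Rightarrow> 'a::ring_1"
  assumes inv: "is_mat_inverse d (Theta \<phi> m d) (mat_inv d (Theta \<phi> m d))" and dK: "d < K"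
    and supp: "\<And>k. d < k \<Longrightarrow> u k = 0"
    and ann: "\<And>j. j < d \<Longrightarrow> pairing \<phi> K m u j = 0"
  shows "pairing \<phi> K m u d = u d * theta \<phi> m (d+1)"
proof -
  define v where "v = (\<lambda>k. u k - u d * Pc \<phi> m d k)"
  have vp: "pairing \<phi> K m v j = pairing \<phi> K m u j - u d * pairing \<phi> K m (Pc \<phi> m d) j" for j
    unfolding v_def pairing_diff pairing_smult ..
  have vz: "v k = 0" if "d \<le> k" for k
    using that supp unfolding v_def by (cases "k = d") (auto simp: Pc_d Pc_gt)
  have "v i = 0" for i
  proof (cases "i < d")
    case True
    show ?thesis
    proof (rule row_zero[OF inv _ True])
      fix j assume j: "j < d"
      have "(\<Sum>k<d. v k * Theta \<phi> m d k j) = pairing \<phi> K m v j"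
        by (subst pairing_trunc[of d]) (use dK vz in \<open>auto simp: Theta_def\<close>)
      also have "\<dots> = 0" using vp[of j] ann[OF j] orth(1)[OF inv dK j] by simp
      finally show "(\<Sum>k<d. v k * Theta \<phi> m d k j) = 0" .
    qed
  next
    case False then show ?thesis using vz by simp
  qed
  then have "pairing \<phi> K m v d = 0" unfolding pairing_def by simp
  then show ?thesis using vp[of d] orth(2)[OF inv dK] by simp
qed

lemma relA:
  fixes \<phi> :: "int \<Rightarrow> 'a::ring_1"
  assumes INV: "\<And>m d. is_mat_inverse d (Theta \<phi> m d) (mat_inv d (Theta \<phi> m d))"
    and n: "1 \<le> n" "n < K"
  shows "(qc \<phi> (m+1) (n-1) - qc \<phi> m n) * theta \<phi> m n = theta \<phi> (m+1) n"
proof -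
  define u where "u = (\<lambda>k. sh (Pc \<phi> (m+1) (n-1)) k - Pc \<phi> m n k)"
  have un: "u (n-1) = qc \<phi> (m+1) (n-1) - qc \<phi> m n"
    using n unfolding u_def qc_def sh_def by (cases "n - 1") auto
  have supp: "u k = 0" if "n - 1 < k" for k
    using that n unfolding u_def sh_def by (cases k) (auto simp: Pc_def)
  have sh0: "Pc \<phi> (m+1) (n-1) (K - 1) = 0" using n by (simp add: Pc_gt)
  have up: "pairing \<phi> K m u j = pairing \<phi> K (m+1) (Pc \<phi> (m+1) (n-1)) j - pairing \<phi> K m (Pc \<phi> m n) j" for j
  proof -
    have "pairing \<phi> K m (sh (Pc \<phi> (m+1) (n-1))) j = pairing \<phi> K (m+1) (Pc \<phi> (m+1) (n-1)) j"
      by (rule pairing_sh) (use n sh0 in auto)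
    then show ?thesis unfolding u_def pairing_diff by simp
  qed
  have "pairing \<phi> K m u (n-1) = u (n-1) * theta \<phi> m (n - 1 + 1)"
  proof (rule multiple[OF INV])
    show "n - 1 < K" using n by simp
    show "\<And>k. n - 1 < k \<Longrightarrow> u k = 0" by (rule supp)
    fix j assume "j < n - 1"
    then show "pairing \<phi> K m u j = 0" unfolding up using orth(1)[OF INV, of "n-1" K j "m+1"] orth(1)[OF INV, of n K j m] n by simp
  qed
  moreover have "pairing \<phi> K m u (n-1) = theta \<phi> (m+1) n"
    unfolding up using orth(2)[OF INV, of "n-1" K "m+1"] orth(1)[OF INV, of n K "n-1" m] n by simp
  ultimately show ?thesis using un n by simp
qed

lemma relC:
  fixes \<phi> :: "int \<Rightarrow> 'a::ring_1"
  assumes INV: "\<And>m d. is_mat_inverse d (Theta \<phi> m d) (mat_inv d (Theta \<phi> m d))"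
    and n: "1 \<le> n" "n < K"
  shows "(qc \<phi> (m+1) n - qc \<phi> m n) * theta \<phi> (m+1) n = - theta \<phi> m (n+1)"
proof -
  define u where "u = (\<lambda>k. Pc \<phi> (m+1) n k - Pc \<phi> m n k)"
  have un: "u (n-1) = qc \<phi> (m+1) n - qc \<phi> m n"
    using n unfolding u_def qc_def by auto
  have supp: "u k = 0" if "n - 1 < k" for k
    using that n unfolding u_def by (cases "k = n") (auto simp: Pc_def)
  have up: "pairing \<phi> K (m+1) u j = pairing \<phi> K (m+1) (Pc \<phi> (m+1) n) j - pairing \<phi> K m (Pc \<phi> m n) (Suc j)" for j
    unfolding u_def pairing_diff pairing_Suc ..
  have "pairing \<phi> K (m+1) u (n-1) = u (n-1) * theta \<phi> (m+1) (n - 1 + 1)"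
  proof (rule multiple[OF INV])
    show "n - 1 < K" using n by simp
    show "\<And>k. n - 1 < k \<Longrightarrow> u k = 0" by (rule supp)
    fix j assume "j < n - 1"
    then show "pairing \<phi> K (m+1) u j = 0" unfolding up using orth(1)[OF INV, of n K j "m+1"] orth(1)[OF INV, of n K "Suc j" m] n by simp
  qed
  moreover have "pairing \<phi> K (m+1) u (n-1) = - theta \<phi> m (n+1)"
    unfolding up using orth(1)[OF INV, of n K "n-1" "m+1"] orth(2)[OF INV, of n K m] n by simp
  ultimately show ?thesis using un n by simp
qed


lemma INV_from_defined:
  fixes \<phi> :: "int \<Rightarrow> 'a::ring_1"
  assumes defined: "\<And>m' k. 1 \<le> k \<Longrightarrow> qdet_defined k (Theta \<phi> m' k) (k-1) (k-1)"
  shows "is_mat_inverse d (Theta \<phi> m d) (mat_inv d (Theta \<phi> m d))"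
proof (cases "d = 0")
  case True then show ?thesis by (simp add: is_mat_inverse_def)
next
  case False
  have "mat_invertible d (minor (Theta \<phi> m (Suc d)) d d)"
    using defined[of "Suc d" m] False by (simp add: qdet_defined_def)
  moreover have "\<And>B. is_mat_inverse d (minor (Theta \<phi> m (Suc d)) d d) B = is_mat_inverse d (Theta \<phi> m d) B"
    by (rule is_inv_cong) (simp add: minor_def skip_def Theta_def)
  ultimately have "mat_invertible d (Theta \<phi> m d)" by (simp add: mat_invertible_def)
  then show ?thesis by (rule mat_inv_is_inverse)
qed

theorem proposition4p5:
  fixes \<phi> :: "int \<Rightarrow> 'a::{division_ring, ring_char_0}"
    and m :: int and n :: nat
  assumes defined: "\<And>m' k. 1 \<le> k \<Longrightarrow> qdet_defined k (Theta \<phi> m' k) (k-1) (k-1)"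
    and invertible: "\<And>m' k. 1 \<le> k \<Longrightarrow> theta \<phi> m' k \<noteq> 0"
    and n: "1 \<le> n"
  shows "theta \<phi> (m+2) n =
           theta \<phi> m (n+1)
           + theta \<phi> (m+1) n * (theta_inv \<phi> m n - theta_inv \<phi> (m+2) (n-1)) * theta \<phi> (m+1) n"
proof -
  note INV = INV_from_defined[OF defined]
  define K where "K = n + 2"
  have nK: "n < K" unfolding K_def by simp
  let ?t0 = "theta \<phi> m n" and ?t1 = "theta \<phi> (m+1) n" and ?t2 = "theta \<phi> (m+2) n"
    and ?T = "theta \<phi> m (n+1)" and ?s = "theta_inv \<phi> (m+2) (n-1)"
  let ?a = "qc \<phi> (m+2) (n-1)" and ?b = "qc \<phi> (m+1) n" and ?c = "qc \<phi> m n"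
    and ?e = "qc \<phi> (m+1) (n-1)"
  have A1: "(?e - ?c) * ?t0 = ?t1" by (rule relA[OF INV n nK])
  have A2: "(?a - ?b) * ?t1 = ?t2" using relA[OF INV n nK, of "m+1"] by (simp add: add.assoc)
  have C1: "(?b - ?c) * ?t1 = - ?T" by (rule relC[OF INV n nK])
  have C2: "?a - ?e = - (?t1 * ?s)"
  proof (cases "n = 1")
    case True then show ?thesis by (simp add: qc_def theta_inv_def)
  next
    case False
    then have n2: "1 \<le> n - 1" "n - 1 < K" using n nK by auto
    have "(?a - ?e) * theta \<phi> (m+2) (n-1) = - theta \<phi> (m+1) (n - 1 + 1)"
      using relC[OF INV n2, of "m+1"] by (simp add: add.assoc)
    then have "(?a - ?e) * theta \<phi> (m+2) (n-1) = - ?t1" using n by simp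
    moreover have nz: "theta \<phi> (m+2) (n-1) \<noteq> 0" using invertible n2 by blast
    ultimately have "?a - ?e = - ?t1 * inverse (theta \<phi> (m+2) (n-1))"
      by (metis mult.assoc right_inverse mult_1_right)
    then show ?thesis using False n by (simp add: theta_inv_def)
  qed
  have t0: "?t0 \<noteq> 0" using invertible n by blast
  have E1: "?e - ?c = ?t1 * inverse ?t0"
    using A1 t0 by (metis mult.assoc right_inverse mult_1_right)
  have "?t2 = (?a - ?c) * ?t1 - (?b - ?c) * ?t1" unfolding A2[symmetric] by (simp add: algebra_simps)
  also have "\<dots> = (?a - ?c) * ?t1 + ?T" using C1 by simp
  also have "?a - ?c = (?a - ?e) + (?e - ?c)" by simp
  also have "\<dots> = ?t1 * (inverse ?t0 - ?s)" unfolding C2 E1 by (simp add: algebra_simps)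
  finally show ?thesis using n by (simp add: theta_inv_def algebra_simps)
qed

end
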